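(* Let $\tau\in(0,1)$, let $\mathcal Y\subseteq\mathbb R$ be an interval, a half-line or $\mathbb R$, and let $\mathcal F$ be a class of distributions supported on $\mathcal Y$, all with finite first moment. Let $\Phi:\mathcal Y^2\to\mathbb R$ be convex (respectively strictly convex) with sub-gradient $\nabla\Phi=(\partial_1\Phi,\partial_2\Phi)$, and let $g:\mathcal Y\to\mathbb R$ be such that for every $(e^-,e^+)\in\mathcal Y^2$ the function \[ G_{e^-,e^+}:\mathcal Y\to\mathbb R,\qquad v\mapsto g(v)+\tfrac1\tau\partial_1\Phi(e^-,e^+)\,v-\tfrac{1}{1-\tau}\partial_2\Phi(e^-,e^+)\,v \] is increasing (respectively strictly increasing). Assume $\mathbb E_F[|g(Y)|]<\infty$ and $\mathbb E_F[|\Phi(Y,Y)|]<\infty$ for all $Y\sim F\in\mathcal F$. Define $L:\mathcal Y\times\mathcal Y^3\to\mathbb R$ by \[ L(y;e^-,v,e^+)=\big(g(y)-g(v)\big)\big(\tau-\mathds 1_{\{y\le v\}}\big)+\left\langle\nabla\Phi(e^-,e^+),\begin{pmatrix} e^-+\tfrac1\tau S^-_\tau(y;v)\\ e^+-\tfrac{1}{1-\tau}S^+_\tau(y;v)\end{pmatrix}\right\rangle-\Phi(e^-,e^+)+\Phi(y,y). \] Then $L$ is $\mathcal F$-consistent (respectively strictly $\mathcal F$-consistent) for the composite triplet $(\mathrm{ES}^-_\tau,q_\tau,\mathrm{ES}^+_\tau)$. Moreover, $L(y;e^-,v,e^+)\ge L(y;y,y,y)=0$ for all $y\in\mathcal Y$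 and $(e^-,v,e^+)\in\mathcal Y^3$.
   Context: For $y,a\in\mathbb R$: $S^-_\tau(y;a) = (\mathds{1}_{\{y\le a\}} - \tau)a - \mathds{1}_{\{y\le a\}}y$ and $S^+_\tau(y;a) = (1-\tau - \mathds{1}_{\{y > a\}})a + \mathds{1}_{\{y> a\}}y$. For a distribution function $F$, $F^{-1}(p)=\inf\{y: F(y)\ge p\}$, the set-valued $\tau$-quantile is $q_\tau(F)=\{t\in\mathbb R: F(t-)\le\tau\le F(t)\}$, and the lower and upper expected shortfalls are $\mathrm{ES}^-_\tau(F)=\frac1\tau\int_0^\tau F^{-1}(p)\,dp$ and $\mathrm{ES}^+_\tau(F)=\frac1{1-\tau}\int_\tau^1F^{-1}(p)\,dp$. The composite triplet is the set-valued functional $F\mapsto\{(\mathrm{ES}^-_\tau(F),v,\mathrm{ES}^+_\tau(F)): v\in q_\tau(F)\}$. A scoring function $L:\mathcal Y\times\mathcal A\to\mathbb R$ is $\mathcal F$-consistent for a functional $A:\mathcal F\to\mathcal P(\mathcal A)$ if $\mathbb E_F[|L(Y;a)|]<\infty$ for all $Y\sim F\in\mathcal F$ and $a\in\mathcal A$, and $\mathbb E_F[L(Y;\hat a)]\le\mathbb E_F[L(Y;a)]$ for all $F\in\mathcal F$, $\hat a\in A(F)$, $a\in\mathcal A$; it is strictly $\mathcal F$-consistent if moreover equality implies $a\in A(F)$. *)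

theory Defs
  imports "HOL-Probability.Probability"
begin

definition S_minus :: "real \<Rightarrow> real \<Rightarrow> real \<Rightarrow> real" where
  "S_minus \<tau> y a = ((if y \<le> a then 1 else 0) - \<tau>) * a - (if y \<le> a then 1 else 0) * y"

definition S_plus :: "real \<Rightarrow> real \<Rightarrow> real \<Rightarrow> real" where
  "S_plus \<tau> y a = (1 - \<tau> - (if y > a then 1 else 0)) * a + (if y > a then 1 else 0) * y"

definition quantile_fun :: "real measure \<Rightarrow> real \<Rightarrow> real" where
  "quantile_fun M p = Inf {y. cdf M y \<ge> p}"

definition quantile_set :: "real \<Rightarrow> real measure \<Rightarrow> real set" where
  "quantile_set \<tau> M = {t. measure M {..<t} \<le> \<tau> \<and> \<tau> \<le> cdf M t}"

definition ES_lower :: "real \<Rightarrow> real measure \<Rightarrow> real" where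
  "ES_lower \<tau> M = (1 / \<tau>) * (LINT p:{0<..<\<tau>}|lborel. quantile_fun M p)"

definition ES_upper :: "real \<Rightarrow> real measure \<Rightarrow> real" where
  "ES_upper \<tau> M = (1 / (1 - \<tau>)) * (LINT p:{\<tau><..<1}|lborel. quantile_fun M p)"

definition composite_triplet :: "real \<Rightarrow> real measure \<Rightarrow> (real \<times> real \<times> real) set" where
  "composite_triplet \<tau> M = {(ES_lower \<tau> M, v, ES_upper \<tau> M) | v. v \<in> quantile_set \<tau> M}"

definition consistent ::
  "real measure set \<Rightarrow> 'a set \<Rightarrow> (real \<Rightarrow> 'a \<Rightarrow> real) \<Rightarrow> (real measure \<Rightarrow> 'a set) \<Rightarrow> bool" where
  "consistent Fs A L T \<longleftrightarrow>
     (\<forall>M\<in>Fs. \<forall>a\<in>A. integrable M (\<lambda>y. L y a)) \<and>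
     (\<forall>M\<in>Fs. \<forall>ah\<in>T M. \<forall>a\<in>A. (\<integral>y. L y ah \<partial>M) \<le> (\<integral>y. L y a \<partial>M))"

definition strictly_consistent ::
  "real measure set \<Rightarrow> 'a set \<Rightarrow> (real \<Rightarrow> 'a \<Rightarrow> real) \<Rightarrow> (real measure \<Rightarrow> 'a set) \<Rightarrow> bool" where
  "strictly_consistent Fs A L T \<longleftrightarrow> consistent Fs A L T \<and>
     (\<forall>M\<in>Fs. \<forall>ah\<in>T M. \<forall>a\<in>A. (\<integral>y. L y ah \<partial>M) = (\<integral>y. L y a \<partial>M) \<longrightarrow> a \<in> T M)"

definition strict_convex_on :: "'a::real_vector set \<Rightarrow> ('a \<Rightarrow> real) \<Rightarrow> bool" where
  "strict_convex_on S f \<longleftrightarrow> convex S \<and>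
    (\<forall>x\<in>S. \<forall>y\<in>S. x \<noteq> y \<longrightarrow> (\<forall>u. 0 < u \<and> u < 1 \<longrightarrow>
        f ((1 - u) *\<^sub>R x + u *\<^sub>R y) < (1 - u) * f x + u * f y))"

definition is_subgradient_on :: "'a::real_inner set \<Rightarrow> ('a \<Rightarrow> real) \<Rightarrow> ('a \<Rightarrow> 'a) \<Rightarrow> bool" where
  "is_subgradient_on S f df \<longleftrightarrow> (\<forall>x\<in>S. \<forall>z\<in>S. f z \<ge> f x + df x \<bullet> (z - x))"

definition G_fun :: "real \<Rightarrow> (real \<Rightarrow> real) \<Rightarrow> (real \<times> real \<Rightarrow> real \<times> real) \<Rightarrow> real \<times> real \<Rightarrow> real \<Rightarrow> real" where
  "G_fun \<tau> g d\<Phi> e v = g v + (1 / \<tau>) * fst (d\<Phi> e) * v - (1 / (1 - \<tau>)) * snd (d\<Phi> e) * v"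

definition score_L ::
  "real \<Rightarrow> (real \<Rightarrow> real) \<Rightarrow> (real \<times> real \<Rightarrow> real) \<Rightarrow> (real \<times> real \<Rightarrow> real \<times> real)
     \<Rightarrow> real \<Rightarrow> real \<times> real \<times> real \<Rightarrow> real" where
  "score_L \<tau> g \<Phi> d\<Phi> y a = (case a of (em, v, ep) \<Rightarrow>
      (g y - g v) * (\<tau> - (if y \<le> v then 1 else 0))
      + d\<Phi> (em, ep) \<bullet> (em + (1 / \<tau>) * S_minus \<tau> y v, ep - (1 / (1 - \<tau>)) * S_plus \<tau> y v)
      - \<Phi> (em, ep) + \<Phi> (y, y))"

end

theory Submission imports Defs begin

lemma interval_split:
  fixes Y :: "real set"
  assumes "is_interval Y" "m \<notin> Y"
  shows "(\<forall>y\<in>Y. y < m) \<or> (\<forall>y\<in>Y. m < y)"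
proof (rule ccontr)
  assume "\<not> ?thesis"
  then obtain a b where "a \<in> Y" "b \<in> Y" "m \<le> a" "b \<le> m" by (auto simp: not_less)
  thus False using assms unfolding is_interval_1 by blast
qed

lemma mean_in_interval:
  fixes h :: "real \<Rightarrow> real" and Y :: "real set"
  assumes B: "B \<in> sets lborel" "emeasure lborel B < \<infinity>" "measure lborel B > 0"
    and hi: "integrable lborel (\<lambda>x. indicator B x * h x)"
    and ae: "AE x in lborel. x \<in> B \<longrightarrow> h x \<in> Y"
    and Y: "is_interval Y"
    and m: "measure lborel B * m = (\<integral>x. indicator B x * h x \<partial>lborel)"
  shows "m \<in> Y"
proof (rule ccontr)
  assume nm: "m \<notin> Y"
  have ib: "integrable lborel (indicator B :: real \<Rightarrow> real)"
    using B by (simp add: integrable_indicator_iff)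
  have null: False if f: "integrable lborel f" "AE x in lborel. 0 \<le> f x"
      "integral\<^sup>L lborel f = 0" "AE x in lborel. x \<in> B \<longrightarrow> 0 < f x" for f :: "real \<Rightarrow> real"
  proof -
    have "AE x in lborel. f x = 0" using integral_nonneg_eq_0_iff_AE[OF f(1,2)] f(3) by simp
    hence "AE x in lborel. x \<notin> B" using f(4) by eventually_elim auto
    hence "B \<in> null_sets lborel" using AE_iff_null_sets[OF B(1)] by simp
    thus False using B(3) by (simp add: null_sets_def measure_def)
  qed
  from interval_split[OF Y nm] show False
  proof
    assume all: "\<forall>y\<in>Y. y < m"
    let ?f = "\<lambda>x. m * indicator B x - indicator B x * h x"
    show False
    proof (rule null)
      show "integrable lborel ?f" using ib hi by auto
      show "AE x in lborel. 0 \<le> ?f x" using ae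
        by eventually_elim (use all in \<open>auto simp: indicator_def less_imp_le\<close>)
      show "AE x in lborel. x \<in> B \<longrightarrow> 0 < ?f x" using ae
        by eventually_elim (use all in \<open>auto simp: indicator_def\<close>)
      show "integral\<^sup>L lborel ?f = 0"
        using ib hi m B by (simp add: Bochner_Integration.integral_diff mult.commute)
    qed
  next
    assume all: "\<forall>y\<in>Y. m < y"
    let ?f = "\<lambda>x. indicator B x * h x - m * indicator B x"
    show False
    proof (rule null)
      show "integrable lborel ?f" using ib hi by auto
      show "AE x in lborel. 0 \<le> ?f x" using ae
        by eventually_elim (use all in \<open>auto simp: indicator_def less_imp_le\<close>)
      show "AE x in lborel. x \<in> B \<longrightarrow> 0 < ?f x" using ae
        by eventually_elim (use all in \<open>auto simp: indicator_def\<close>)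
      show "integral\<^sup>L lborel ?f = 0"
        using ib hi m B by (simp add: Bochner_Integration.integral_diff mult.commute)
    qed
  qed
qed

lemma aux1:
  fixes \<tau> a b :: real
  assumes "a * \<tau> = 1" "b * (1 - \<tau>) = 1"
  shows "(g1 - g2) * (\<tau> - 1) + d1 * (em + a*((1 - \<tau>)* v - y)) + d2*(ep - b*((1-\<tau>)* v))
     = (\<tau>-1)*((g1 + a*d1*y - b*d2*y) - (g2 + a*d1* v - b*d2* v)) + d1*(em - y) + d2*(ep - y)"
  using assms by algebra

lemma aux2:
  fixes \<tau> a b :: real
  assumes "a * \<tau> = 1" "b * (1 - \<tau>) = 1"
  shows "(g1 - g2) * \<tau> + d1 * (em + a*(-\<tau>* v)) + d2*(ep - b*(y - \<tau>* v))
     = \<tau>*((g1 + a*d1*y - b*d2*y) - (g2 + a*d1* v - b*d2* v)) + d1*(em - y) + d2*(ep - y)"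
  using assms by algebra

lemma score_alt:
  assumes "\<tau> \<noteq> 0" "\<tau> \<noteq> 1"
  shows "score_L \<tau> g \<Phi> d\<Phi> y (em, v, ep) =
    (\<tau> - indicator {..v} y) * (G_fun \<tau> g d\<Phi> (em, ep) y - G_fun \<tau> g d\<Phi> (em, ep) v)
    + fst (d\<Phi> (em, ep)) * (em - y) + snd (d\<Phi> (em, ep)) * (ep - y) - \<Phi> (em, ep) + \<Phi> (y, y)"
proof -
  have t1: "1 - \<tau> \<noteq> 0" using assms by simp
  have a: "(1/\<tau>) * \<tau> = 1" "(1/(1-\<tau>)) * (1 - \<tau>) = 1" using assms t1 by auto
  define d1 where "d1 = fst (d\<Phi> (em, ep))"
  define d2 where "d2 = snd (d\<Phi> (em, ep))"
  have dd: "d\<Phi> (em, ep) = (d1, d2)" by (simp add: d1_def d2_def)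
  show ?thesis
  proof (cases "y \<le> v")
    case True
    have "score_L \<tau> g \<Phi> d\<Phi> y (em, v, ep) = (g y - g v) * (\<tau> - 1) + d1 * (em + (1/\<tau>)*((1 - \<tau>)* v - y))
       + d2*(ep - (1/(1-\<tau>))*((1-\<tau>)* v)) - \<Phi> (em, ep) + \<Phi> (y, y)"
      using True assms by (simp add: score_L_def S_minus_def S_plus_def inner_prod_def d1_def d2_def)
    also have "\<dots> = (\<tau>-1)*((g y + (1/\<tau>)*d1*y - (1/(1-\<tau>))*d2*y) - (g v + (1/\<tau>)*d1* v - (1/(1-\<tau>))*d2* v))
       + d1*(em - y) + d2*(ep - y) - \<Phi> (em, ep) + \<Phi> (y, y)"
      using aux1[OF a] by simp
    finally show ?thesis using True by (simp add: G_fun_def dd indicator_def)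
  next
    case False
    have "score_L \<tau> g \<Phi> d\<Phi> y (em, v, ep) = (g y - g v) * \<tau> + d1 * (em + (1/\<tau>)*(-\<tau>* v))
       + d2*(ep - (1/(1-\<tau>))*(y - \<tau>* v)) - \<Phi> (em, ep) + \<Phi> (y, y)"
      using False assms by (simp add: score_L_def S_minus_def S_plus_def inner_prod_def d1_def d2_def)
    also have "\<dots> = \<tau>*((g y + (1/\<tau>)*d1*y - (1/(1-\<tau>))*d2*y) - (g v + (1/\<tau>)*d1* v - (1/(1-\<tau>))*d2* v))
       + d1*(em - y) + d2*(ep - y) - \<Phi> (em, ep) + \<Phi> (y, y)"
      using aux2[OF a] by simp
    finally show ?thesis using False by (simp add: G_fun_def dd indicator_def)
  qed
qed

lemma strict_convex_eq:
  fixes \<Phi> :: "real \<times> real \<Rightarrow> real"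
  assumes sc: "strict_convex_on S \<Phi>" and sg: "is_subgradient_on S \<Phi> d\<Phi>"
    and x: "x \<in> S" and z: "z \<in> S" and eq: "\<Phi> z = \<Phi> x + d\<Phi> x \<bullet> (z - x)"
  shows "z = x"
proof (rule ccontr)
  assume ne: "z \<noteq> x"
  let ?m = "(1 - 1/2) *\<^sub>R x + (1/2::real) *\<^sub>R z"
  have cS: "convex S" using sc by (simp add: strict_convex_on_def)
  have mS: "?m \<in> S" using convexD[OF cS x z, of "1 - 1/2" "1/2"] by simp
  have all: "\<forall>u. 0 < u \<and> u < 1 \<longrightarrow> \<Phi> ((1 - u) *\<^sub>R x + u *\<^sub>R z) < (1 - u) * \<Phi> x + u * \<Phi> z"
    using sc x z ne[symmetric] unfolding strict_convex_on_def by blast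
  have lt: "\<Phi> ?m < (1 - 1/2) * \<Phi> x + (1/2) * \<Phi> z"
    by (rule all[rule_format]) simp
  have ge: "\<Phi> ?m \<ge> \<Phi> x + d\<Phi> x \<bullet> (?m - x)"
    using sg x mS by (simp add: is_subgradient_on_def)
  have "?m - x = (1/2::real) *\<^sub>R (z - x)" by (simp add: algebra_simps flip: scaleR_add_left)
  hence hd: "d\<Phi> x \<bullet> (?m - x) = (1/2) * (d\<Phi> x \<bullet> (z - x))" by (simp add: inner_scaleR_right)
  have "\<Phi> ?m < \<Phi> x + (1/2) * (d\<Phi> x \<bullet> (z - x))" using lt eq by (simp add: algebra_simps)
  thus False using ge hd by linarith
qed

context cdf_distribution
begin

lemma I_meas_lborel: "(\<lambda>x. I x) \<in> measurable (restrict_space lborel {0<..<1::real}) borel"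
  using measurable_CI by (simp add: measurable_def space_restrict_space sets_restrict_space)

lemma transfer_int:
  fixes f :: "real \<Rightarrow> real"
  assumes f: "integrable M f"
  shows "integrable lborel (\<lambda>x. indicator {0<..<1} x * f (I x))"
    and "(\<integral>y. f y \<partial>M) = (\<integral>x. indicator {0<..<1} x * f (I x) \<partial>lborel)"
proof -
  have fm: "f \<in> borel_measurable borel"
    using borel_measurable_integrable[OF f] by (simp add: measurable_def)
  have "integrable (distr (restrict_space lborel {0<..<1::real}) borel I) f"
    using f distr_I_eq_M by simp
  hence "integrable (restrict_space lborel {0<..<1::real}) (\<lambda>x. f (I x))"
    using integrable_distr_eq[OF I_meas_lborel fm] by simp
  thus "integrable lborel (\<lambda>x. indicator {0<..<1} x * f (I x))"
    by (subst (asm) integrable_restrict_space) auto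
  have "(\<integral>y. f y \<partial>M) = (\<integral>y. f y \<partial>(distr (restrict_space lborel {0<..<1::real}) borel I))"
    using distr_I_eq_M by simp
  also have "\<dots> = (\<integral>x. f (I x) \<partial>(restrict_space lborel {0<..<1::real}))"
    by (rule integral_distr[OF I_meas_lborel fm])
  also have "\<dots> = (\<integral>x. indicator {0<..<1} x * f (I x) \<partial>lborel)"
    by (subst integral_restrict_space) auto
  finally show "(\<integral>y. f y \<partial>M) = (\<integral>x. indicator {0<..<1} x * f (I x) \<partial>lborel)" .
qed

lemma transfer_AE:
  assumes "AE y in M. y \<in> Y" "Y \<in> sets borel"
  shows "AE x in lborel. x \<in> {0<..<1} \<longrightarrow> I x \<in> Y"
proof -
  have "AE y in distr (restrict_space lborel {0<..<1::real}) borel I. y \<in> Y"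
    unfolding distr_I_eq_M by (rule assms(1))
  hence "AE x in restrict_space lborel {0<..<1::real}. I x \<in> Y"
    using AE_distr_iff[OF I_meas_lborel, of "\<lambda>y. y \<in> Y"] assms(2) by simp
  thus ?thesis by (subst (asm) AE_restrict_space_iff) auto
qed


lemma meas_I:
  fixes f :: "real \<Rightarrow> real"
  assumes f: "f \<in> borel_measurable borel"
  shows "(\<lambda>x. indicator {0<..<1} x * f (I x)) \<in> borel_measurable lborel"
proof -
  have "(\<lambda>x. f (I x)) \<in> borel_measurable (restrict_space lborel {0<..<1::real})"
    by (rule measurable_compose[OF I_meas_lborel f])
  thus ?thesis by (subst (asm) borel_measurable_restrict_space_iff) auto
qed

lemma quantile_fun_eq: "quantile_fun M p = I p"
  unfolding quantile_fun_def by simp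

lemma I_ge_q:
  assumes "q \<in> quantile_set \<tau> M" "\<tau> < \<omega>" "\<omega> < 1" "0 < \<omega>"
  shows "q \<le> I \<omega>"
proof (rule ccontr)
  assume "\<not> q \<le> I \<omega>"
  hence lt: "I \<omega> < q" by simp
  have "\<omega> \<le> C (I \<omega>)" using pseudoinverse[of \<omega> "I \<omega>"] assms by simp
  also have "C (I \<omega>) = measure M {..I \<omega>}" by (simp add: cdf_def)
  also have "\<dots> \<le> measure M {..<q}"
    using lt by (intro finite_measure_mono) auto
  also have "\<dots> \<le> \<tau>" using assms(1) by (simp add: quantile_set_def)
  finally show False using assms by simp
qed

lemma ES_lower_id:
  assumes tau: "0 < \<tau>" "\<tau> < 1" and q: "q \<in> quantile_set \<tau> M" and int: "integrable M (\<lambda>y. y)"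
  shows "\<tau> * ES_lower \<tau> M = (\<integral>y. indicator {..q} y * y \<partial>M) + q * (\<tau> - C q)"
proof -
  have qq: "measure M {..<q} \<le> \<tau>" "\<tau> \<le> C q" using q by (auto simp: quantile_set_def)
  have Cq1: "C q \<le> 1" by (rule cdf_bounded_prob)
  have intf: "integrable M (\<lambda>y. indicator {..q} y * y)"
    using integrable_mult_indicator[OF _ int, of "{..q}"] by simp
  have "\<tau> * ES_lower \<tau> M = (LINT p:{0<..<\<tau>}|lborel. I p)"
    using tau by (simp add: ES_lower_def quantile_fun_eq)
  also have "\<dots> = (\<integral>x. indicator {0<..<\<tau>} x * I x \<partial>lborel)"
    by (simp add: set_lebesgue_integral_def)
  also have "\<dots> = (\<integral>x. indicator {0<..<1} x * (indicator {..q} (I x) * I x)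
                     - q * indicator {\<tau><..C q} x \<partial>lborel)"
  proof -
    have ae: "AE x in lborel. indicator {0<..<\<tau>} x * I x = indicator {0<..<1} x * (indicator {..q} (I x) * I x)
                     - q * indicator {\<tau><..C q} x"
      using AE_lborel_singleton[of \<tau>] AE_lborel_singleton[of 1]
    proof eventually_elim
      case (elim x)
      show ?case
      proof (cases "0 < x \<and> x < 1")
        case True
        have equiv: "x \<le> C y \<longleftrightarrow> I x \<le> y" for y using pseudoinverse[of x y] True by blast
        have i01: "indicator {0<..<1} x = (1::real)" using True by (simp add: indicator_def)
        show ?thesis
        proof (cases "x < \<tau>")
          case True2: True
          have "x \<le> C q" using True2 qq by simp
          hence "I x \<le> q" using equiv[of q] by blast
          hence i1: "indicator {..q} (I x) = (1::real)" by (simp add: indicator_def)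
          have i2: "indicator {0<..<\<tau>} x = (1::real)" using True True2 by (simp add: indicator_def)
          have i3: "indicator {\<tau><..C q} x = (0::real)" using True2 by (simp add: indicator_def)
          show ?thesis by (simp add: i01 i1 i2 i3)
        next
          case False
          hence gt: "\<tau> < x" using elim by simp
          have "q \<le> I x" using I_ge_q[OF q gt] True by simp
          have i2: "indicator {0<..<\<tau>} x = (0::real)" using gt by (simp add: indicator_def)
          show ?thesis
          proof (cases "x \<le> C q")
            case True3: True
            hence "I x \<le> q" using equiv[of q] by blast
            hence e: "I x = q" using \<open>q \<le> I x\<close> by simp
            hence i1: "indicator {..q} (I x) = (1::real)" by (simp add: indicator_def)
            have i3: "indicator {\<tau><..C q} x = (1::real)" using True3 gt by (simp add: indicator_def)
            show ?thesis by (simp add: i01 i1 i2 i3 e)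
          next
            case False3: False
            hence "\<not> I x \<le> q" using equiv[of q] by blast
            hence i1: "indicator {..q} (I x) = (0::real)" by (simp add: indicator_def)
            have i3: "indicator {\<tau><..C q} x = (0::real)" using False3 by (simp add: indicator_def)
            show ?thesis by (simp add: i01 i1 i2 i3)
          qed
        qed
      next
        case False
        hence i01: "indicator {0<..<1} x = (0::real)" by (simp add: indicator_def)
        have i2: "indicator {0<..<\<tau>} x = (0::real)" using False tau by (auto simp: indicator_def)
        have i3: "indicator {\<tau><..C q} x = (0::real)" using False elim Cq1 tau by (auto simp: indicator_def)
        show ?thesis by (simp add: i01 i2 i3)
      qed
    qed
    have m1: "(\<lambda>x. indicator {0<..<1} x * I x) \<in> borel_measurable lborel"
      using meas_I[of "\<lambda>y. y"] by simp
    have m2: "(\<lambda>x. indicator {0<..<1} x * (indicator {..q} (I x) * I x)) \<in> borel_measurable lborel"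
      using meas_I[of "\<lambda>y. indicator {..q} y * y"] by simp
    have e: "(\<lambda>x. indicator {0<..<\<tau>} x * I x) = (\<lambda>x. indicator {..<\<tau>} x * (indicator {0<..<1} x * I x))"
      using tau by (auto simp: indicator_def fun_eq_iff)
    have mf: "(\<lambda>x. indicator {0<..<\<tau>} x * I x) \<in> borel_measurable lborel"
      unfolding e using m1 by measurable
    have mg: "(\<lambda>x. indicator {0<..<1} x * (indicator {..q} (I x) * I x)
                     - q * indicator {\<tau><..C q} x) \<in> borel_measurable lborel"
      using m2 by measurable
    show ?thesis by (rule integral_cong_AE[OF mf mg ae])
  qed
  also have "\<dots> = (\<integral>x. indicator {0<..<1} x * (indicator {..q} (I x) * I x) \<partial>lborel)
                     - (\<integral>x. q * indicator {\<tau><..C q} x \<partial>lborel)"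
    by (rule Bochner_Integration.integral_diff[OF transfer_int(1)[OF intf]])
       (intro integrable_mult_right, simp add: integrable_indicator_iff qq)
  also have "(\<integral>x. q * indicator {\<tau><..C q} x \<partial>lborel) = q * (C q - \<tau>)"
    using qq by simp
  also have "(\<integral>x. indicator {0<..<1} x * (indicator {..q} (I x) * I x) \<partial>lborel)
             = (\<integral>y. indicator {..q} y * y \<partial>M)"
    using transfer_int(2)[OF intf] by simp
  finally show ?thesis by (simp add: algebra_simps)
qed


lemma ES_upper_id:
  assumes tau: "0 < \<tau>" "\<tau> < 1" and int: "integrable M (\<lambda>y. y)"
  shows "(1 - \<tau>) * ES_upper \<tau> M = (\<integral>y. y \<partial>M) - \<tau> * ES_lower \<tau> M"
proof -
  have int1: "integrable lborel (\<lambda>x. indicator {0<..<1} x * I x)"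
    using transfer_int(1)[OF int] by simp
  have int2: "integrable lborel (\<lambda>x. indicator {0<..<\<tau>} x * I x)"
  proof -
    have "integrable lborel (\<lambda>x. indicator {..<\<tau>} x *\<^sub>R (indicator {0<..<1} x * I x))"
      by (rule integrable_mult_indicator[OF _ int1]) simp
    moreover have "(\<lambda>x. indicator {..<\<tau>} x *\<^sub>R (indicator {0<..<1} x * I x)) = (\<lambda>x. indicator {0<..<\<tau>} x * I x)"
      using tau by (auto simp: indicator_def fun_eq_iff)
    ultimately show ?thesis by simp
  qed
  have m1: "(\<lambda>x. indicator {0<..<1} x * I x) \<in> borel_measurable lborel"
    using meas_I[of "\<lambda>y. y"] by simp
  have e: "(\<lambda>x. indicator {\<tau><..<1} x * I x) = (\<lambda>x. indicator {\<tau><..} x * (indicator {0<..<1} x * I x))"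
    using tau by (auto simp: indicator_def fun_eq_iff)
  have mf: "(\<lambda>x. indicator {\<tau><..<1} x * I x) \<in> borel_measurable lborel"
    unfolding e using m1 by measurable
  have mg: "(\<lambda>x. indicator {0<..<1} x * I x - indicator {0<..<\<tau>} x * I x) \<in> borel_measurable lborel"
    using int1 int2 by measurable
  have ae: "AE x in lborel. indicator {\<tau><..<1} x * I x = indicator {0<..<1} x * I x - indicator {0<..<\<tau>} x * I x"
    using AE_lborel_singleton[of \<tau>]
  proof eventually_elim
    case (elim x)
    thus ?case using tau by (cases "x < \<tau>") (auto simp: indicator_def)
  qed
  have "(1 - \<tau>) * ES_upper \<tau> M = (\<integral>x. indicator {\<tau><..<1} x * I x \<partial>lborel)"
    using tau by (simp add: ES_upper_def quantile_fun_eq set_lebesgue_integral_def)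
  also have "\<dots> = (\<integral>x. indicator {0<..<1} x * I x - indicator {0<..<\<tau>} x * I x \<partial>lborel)"
    by (rule integral_cong_AE[OF mf mg ae])
  also have "\<dots> = (\<integral>x. indicator {0<..<1} x * I x \<partial>lborel) - (\<integral>x. indicator {0<..<\<tau>} x * I x \<partial>lborel)"
    by (rule Bochner_Integration.integral_diff[OF int1 int2])
  also have "(\<integral>x. indicator {0<..<1} x * I x \<partial>lborel) = (\<integral>y. y \<partial>M)"
    using transfer_int(2)[OF int] by simp
  also have "(\<integral>x. indicator {0<..<\<tau>} x * I x \<partial>lborel) = \<tau> * ES_lower \<tau> M"
    using tau by (simp add: ES_lower_def quantile_fun_eq set_lebesgue_integral_def)
  finally show ?thesis .
qed


lemma ES_in:
  assumes tau: "0 < \<tau>" "\<tau> < 1" and int: "integrable M (\<lambda>y. y)"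
    and AEY: "AE y in M. y \<in> Y" and Y: "is_interval Y"
  shows "ES_lower \<tau> M \<in> Y" "ES_upper \<tau> M \<in> Y"
proof -
  have Yb: "Y \<in> sets borel" by (rule real_interval_borel_measurable[OF Y])
  have aeI: "AE x in lborel. x \<in> {0<..<1} \<longrightarrow> I x \<in> Y" by (rule transfer_AE[OF AEY Yb])
  have int1: "integrable lborel (\<lambda>x. indicator {0<..<1} x * I x)"
    using transfer_int(1)[OF int] by simp
  have int2: "integrable lborel (\<lambda>x. indicator {0<..<\<tau>} x * I x)"
  proof -
    have "integrable lborel (\<lambda>x. indicator {..<\<tau>} x *\<^sub>R (indicator {0<..<1} x * I x))"
      by (rule integrable_mult_indicator[OF _ int1]) simp
    moreover have "(\<lambda>x. indicator {..<\<tau>} x *\<^sub>R (indicator {0<..<1} x * I x)) = (\<lambda>x. indicator {0<..<\<tau>} x * I x)"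
      using tau by (auto simp: indicator_def fun_eq_iff)
    ultimately show ?thesis by simp
  qed
  have int3: "integrable lborel (\<lambda>x. indicator {\<tau><..<1} x * I x)"
  proof -
    have "integrable lborel (\<lambda>x. indicator {\<tau><..} x *\<^sub>R (indicator {0<..<1} x * I x))"
      by (rule integrable_mult_indicator[OF _ int1]) simp
    moreover have "(\<lambda>x. indicator {\<tau><..} x *\<^sub>R (indicator {0<..<1} x * I x)) = (\<lambda>x. indicator {\<tau><..<1} x * I x)"
      using tau by (auto simp: indicator_def fun_eq_iff)
    ultimately show ?thesis by simp
  qed
  show "ES_lower \<tau> M \<in> Y"
  proof (rule mean_in_interval[OF _ _ _ int2 _ Y])
    show "AE x in lborel. x \<in> {0<..<\<tau>} \<longrightarrow> I x \<in> Y" using aeI by eventually_elim (use tau in auto)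
    show "measure lborel {0<..<\<tau>} * ES_lower \<tau> M = (\<integral>x. indicator {0<..<\<tau>} x * I x \<partial>lborel)"
      using tau by (simp add: ES_lower_def quantile_fun_eq set_lebesgue_integral_def)
  qed (use tau in auto)
  show "ES_upper \<tau> M \<in> Y"
  proof (rule mean_in_interval[OF _ _ _ int3 _ Y])
    show "AE x in lborel. x \<in> {\<tau><..<1} \<longrightarrow> I x \<in> Y" using aeI by eventually_elim (use tau in auto)
    show "measure lborel {\<tau><..<1} * ES_upper \<tau> M = (\<integral>x. indicator {\<tau><..<1} x * I x \<partial>lborel)"
      using tau by (simp add: ES_upper_def quantile_fun_eq set_lebesgue_integral_def)
  qed (use tau in auto)
qed

lemma quantile_in:
  assumes tau: "0 < \<tau>" "\<tau> < 1" and q: "q \<in> quantile_set \<tau> M"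
    and AEY: "AE y in M. y \<in> Y" and Y: "is_interval Y"
  shows "q \<in> Y"
proof (rule ccontr)
  assume nq: "q \<notin> Y"
  have Yb: "Y \<in> sets borel" by (rule real_interval_borel_measurable[OF Y])
  have qq: "measure M {..<q} \<le> \<tau>" "\<tau> \<le> C q" using q by (auto simp: quantile_set_def)
  from interval_split[OF Y nq] show False
  proof
    assume all: "\<forall>y\<in>Y. y < q"
    have "AE y in M. y \<in> {..<q}" using AEY by eventually_elim (use all in auto)
    hence "measure M {..<q} = 1" by (simp add: prob_eq_1)
    thus False using qq tau by simp
  next
    assume all: "\<forall>y\<in>Y. q < y"
    have "AE y in M. y \<notin> {..q}" using AEY by eventually_elim (use all in force)
    hence "{..q} \<in> null_sets M" using AE_iff_null_sets[of "{..q}" M] by simp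
    hence "measure M {..q} = 0" by (simp add: measure_def null_setsD1)
    thus False using qq tau by (simp add: cdf_def)
  qed
qed


lemma int_ind_mult:
  fixes f :: "real \<Rightarrow> real"
  assumes "A \<in> sets borel" "integrable M f"
  shows "integrable M (\<lambda>y. (c - indicator A y) * f y)"
proof -
  have "integrable M (\<lambda>y. c * f y - indicator A y *\<^sub>R f y)"
    using assms by (intro Bochner_Integration.integrable_diff integrable_mult_right integrable_mult_indicator) auto
  thus ?thesis by (simp add: algebra_simps)
qed

lemma qscore_decomp:
  fixes G :: "real \<Rightarrow> real"
  assumes Gi: "integrable M G"
    and A: "A \<in> sets borel" "\<And>y. (indicator {..q} y - indicator A y) * (G y - G q) = (0::real)"
  shows "(\<integral>y. (\<tau> - indicator {..v} y) * (G y - G v) \<partial>M)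
         = (\<integral>y. (\<tau> - indicator {..q} y) * (G y - G q) \<partial>M)
           + (\<integral>y. (indicator A y - indicator {..v} y) * (G y - G v) \<partial>M)
           + (measure M A - \<tau>) * (G v - G q)"
proof -
  have Gc: "integrable M (\<lambda>y. G y - c)" for c using Gi by auto
  have i1: "integrable M (\<lambda>y. (\<tau> - indicator {..q} y) * (G y - G q))" by (rule int_ind_mult[OF _ Gc]) simp
  have i2: "integrable M (\<lambda>y. (indicator A y - indicator {..v} y) * (G y - G v))"
  proof -
    have "integrable M (\<lambda>y. (0 - indicator {..v} y) * (G y - G v) - (0 - indicator A y) * (G y - G v))"
      by (intro Bochner_Integration.integrable_diff int_ind_mult[OF _ Gc]) (auto simp: A)
    thus ?thesis by (simp add: algebra_simps)
  qed
  have Af: "emeasure M A < top" by (metis A(1) emeasure_finite events_eq_borel less_top)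
  have i3: "integrable M (\<lambda>y. (indicator A y - \<tau>) * (G v - G q))"
  proof -
    have "integrable M (\<lambda>y. (G v - G q) * indicator A y - \<tau> * (G v - G q))"
      using A by (intro Bochner_Integration.integrable_diff integrable_mult_right) (auto simp: integrable_indicator_iff Af)
    thus ?thesis by (simp add: algebra_simps)
  qed
  have pw: "(\<tau> - indicator {..v} y) * (G y - G v) =
      (\<tau> - indicator {..q} y) * (G y - G q) + (indicator A y - indicator {..v} y) * (G y - G v)
      + (indicator A y - \<tau>) * (G v - G q)" for y
    using A(2)[of y] by (simp add: algebra_simps)
  have "(\<integral>y. (\<tau> - indicator {..v} y) * (G y - G v) \<partial>M) =
     (\<integral>y. (\<tau> - indicator {..q} y) * (G y - G q) + (indicator A y - indicator {..v} y) * (G y - G v)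
      + (indicator A y - \<tau>) * (G v - G q) \<partial>M)"
    by (simp only: pw)
  also have "\<dots> = (\<integral>y. (\<tau> - indicator {..q} y) * (G y - G q) \<partial>M)
           + (\<integral>y. (indicator A y - indicator {..v} y) * (G y - G v) \<partial>M)
           + (\<integral>y. (indicator A y - \<tau>) * (G v - G q) \<partial>M)"
    using i1 i2 i3 by simp
  also have "(\<integral>y. (indicator A y - \<tau>) * (G v - G q) \<partial>M) = (measure M A - \<tau>) * (G v - G q)"
  proof -
    have "(\<integral>y. (indicator A y - \<tau>) * (G v - G q) \<partial>M) = (\<integral>y. indicator A y - \<tau> \<partial>M) * (G v - G q)"
      by simp
    also have "(\<integral>y. indicator A y - \<tau> \<partial>M) = measure M A - \<tau>"
      using A by (subst Bochner_Integration.integral_diff) (auto simp: integrable_indicator_iff Af prob_space[symmetric])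
    finally show ?thesis .
  qed
  finally show ?thesis .
qed


lemma null_from_int:
  fixes h :: "real \<Rightarrow> real"
  assumes hi: "integrable M h" and nn: "AE y in M. 0 \<le> h y" and z: "(\<integral>y. h y \<partial>M) = 0"
    and B: "B \<in> sets borel" and pos: "AE y in M. y \<in> B \<longrightarrow> 0 < h y"
  shows "measure M B = 0"
proof -
  have "AE y in M. h y = 0" using integral_nonneg_eq_0_iff_AE[OF hi nn] z by simp
  hence "AE y in M. y \<notin> B" using pos by eventually_elim auto
  hence "B \<in> null_sets M" using AE_iff_null_sets[of B M] B by simp
  thus ?thesis by (simp add: measure_def null_setsD1)
qed

lemma h_int:
  fixes G :: "real \<Rightarrow> real"
  assumes "integrable M G" "A \<in> sets borel" "B \<in> sets borel"
  shows "integrable M (\<lambda>y. (indicator A y - indicator B y) * (G y - c))"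
proof -
  have Gc: "integrable M (\<lambda>y. G y - c)" using assms by auto
  have "integrable M (\<lambda>y. (0 - indicator B y) * (G y - c) - (0 - indicator A y) * (G y - c))"
    by (intro Bochner_Integration.integrable_diff int_ind_mult[OF _ Gc]) (auto simp: assms)
  thus ?thesis by (simp add: algebra_simps)
qed

lemma qscore_min:
  fixes G :: "real \<Rightarrow> real"
  assumes tau: "0 < \<tau>" "\<tau> < 1" and q: "q \<in> quantile_set \<tau> M"
    and AEY: "AE y in M. y \<in> Y" and vY: "v \<in> Y" and qY: "q \<in> Y"
    and Gi: "integrable M G" and Gm: "mono_on Y G"
  shows "(\<integral>y. (\<tau> - indicator {..q} y) * (G y - G q) \<partial>M) \<le> (\<integral>y. (\<tau> - indicator {..v} y) * (G y - G v) \<partial>M)"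
    and "strict_mono_on Y G \<Longrightarrow>
      (\<integral>y. (\<tau> - indicator {..q} y) * (G y - G q) \<partial>M) = (\<integral>y. (\<tau> - indicator {..v} y) * (G y - G v) \<partial>M)
      \<Longrightarrow> v \<in> quantile_set \<tau> M"
proof -
  have qq: "measure M {..<q} \<le> \<tau>" "\<tau> \<le> C q" using q by (auto simp: quantile_set_def)
  let ?Sq = "(\<integral>y. (\<tau> - indicator {..q} y) * (G y - G q) \<partial>M)"
  let ?Sv = "(\<integral>y. (\<tau> - indicator {..v} y) * (G y - G v) \<partial>M)"
  have res: "?Sq \<le> ?Sv \<and> (strict_mono_on Y G \<longrightarrow> ?Sq = ?Sv \<longrightarrow> v \<in> quantile_set \<tau> M)"
  proof (cases "q \<le> v")
    case True
    let ?h = "\<lambda>y. (indicator {..q} y - indicator {..v} y) * (G y - G v)"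
    have dec: "?Sv = ?Sq + (\<integral>y. ?h y \<partial>M) + (measure M {..q} - \<tau>) * (G v - G q)"
      by (rule qscore_decomp[OF Gi]) auto
    have hi: "integrable M ?h" by (rule h_int[OF Gi]) auto
    have hnn: "AE y in M. 0 \<le> ?h y" using AEY
    proof eventually_elim
      case (elim y)
      show ?case
      proof (cases "q < y \<and> y \<le> v")
        case True
        thus ?thesis using mono_onD[OF Gm elim vY] by (simp add: indicator_def)
      next
        case False
        thus ?thesis using \<open>q \<le> v\<close> by (auto simp: indicator_def)
      qed
    qed
    have X: "0 \<le> (\<integral>y. ?h y \<partial>M)" by (rule integral_nonneg_AE[OF hnn])
    have Gvq: "G q \<le> G v" using mono_onD[OF Gm qY vY True] .
    have Z: "0 \<le> (measure M {..q} - \<tau>) * (G v - G q)"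
      using qq Gvq by (intro mult_nonneg_nonneg) (auto simp: cdf_def)
    have strict: "v \<in> quantile_set \<tau> M" if sm: "strict_mono_on Y G" and eq: "?Sq = ?Sv"
    proof (cases "q = v")
      case True thus ?thesis using q by simp
    next
      case False
      hence qv: "q < v" using \<open>q \<le> v\<close> by simp
      have X0: "(\<integral>y. ?h y \<partial>M) = 0" and Z0: "(measure M {..q} - \<tau>) * (G v - G q) = 0"
        using dec eq X Z by linarith+
      have "G q < G v" using strict_mono_onD[OF sm qY vY qv] .
      hence Fq: "C q = \<tau>" using Z0 by (simp add: cdf_def)
      have "measure M {q<..<v} = 0"
      proof (rule null_from_int[OF hi hnn X0])
        show "AE y in M. y \<in> {q<..<v} \<longrightarrow> 0 < ?h y" using AEY
        proof eventually_elim
          case (elim y)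
          show ?case using strict_mono_onD[OF sm elim vY] by (auto simp: indicator_def)
        qed
      qed auto
      moreover have "measure M {..<v} \<le> measure M {..q} + measure M {q<..<v}"
      proof -
        have "{..<v} = {..q} \<union> {q<..<v}" using qv by auto
        thus ?thesis using finite_measure_Union[of "{..q}" "{q<..<v}"] by (simp add: disjoint_iff)
      qed
      moreover have "C q \<le> C v" using qv by (intro cdf_nondecreasing) simp
      ultimately show ?thesis using Fq by (simp add: quantile_set_def cdf_def)
    qed
    show ?thesis using dec X Z strict by auto
  next
    case False
    hence vq: "v < q" by simp
    let ?h = "\<lambda>y. (indicator {..<q} y - indicator {..v} y) * (G y - G v)"
    have dec: "?Sv = ?Sq + (\<integral>y. ?h y \<partial>M) + (measure M {..<q} - \<tau>) * (G v - G q)"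
      by (rule qscore_decomp[OF Gi]) (auto simp: indicator_def)
    have hi: "integrable M ?h" by (rule h_int[OF Gi]) auto
    have hnn: "AE y in M. 0 \<le> ?h y" using AEY
    proof eventually_elim
      case (elim y)
      show ?case
      proof (cases "v < y \<and> y < q")
        case True
        thus ?thesis using mono_onD[OF Gm vY elim] by (simp add: indicator_def)
      next
        case False
        thus ?thesis using vq by (auto simp: indicator_def)
      qed
    qed
    have X: "0 \<le> (\<integral>y. ?h y \<partial>M)" by (rule integral_nonneg_AE[OF hnn])
    have Gvq: "G v \<le> G q" using mono_onD[OF Gm vY qY] vq by simp
    have Z: "0 \<le> (measure M {..<q} - \<tau>) * (G v - G q)"
      using qq Gvq by (intro mult_nonpos_nonpos) auto
    have strict: "v \<in> quantile_set \<tau> M" if sm: "strict_mono_on Y G" and eq: "?Sq = ?Sv"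
    proof -
      have X0: "(\<integral>y. ?h y \<partial>M) = 0" and Z0: "(measure M {..<q} - \<tau>) * (G v - G q) = 0"
        using dec eq X Z by linarith+
      have "G v < G q" using strict_mono_onD[OF sm vY qY vq] .
      hence Fq: "measure M {..<q} = \<tau>" using Z0 by simp
      have "measure M {v<..<q} = 0"
      proof (rule null_from_int[OF hi hnn X0])
        show "AE y in M. y \<in> {v<..<q} \<longrightarrow> 0 < ?h y" using AEY
        proof eventually_elim
          case (elim y)
          show ?case using strict_mono_onD[OF sm vY elim] by (auto simp: indicator_def)
        qed
      qed auto
      moreover have "measure M {..<q} \<le> measure M {..v} + measure M {v<..<q}"
      proof -
        have "{..<q} = {..v} \<union> {v<..<q}" using vq by auto
        thus ?thesis using finite_measure_Union[of "{..v}" "{v<..<q}"] by (simp add: disjoint_iff)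
      qed
      moreover have "measure M {..<v} \<le> measure M {..<q}" using vq by (intro finite_measure_mono) auto
      ultimately show ?thesis using Fq by (simp add: quantile_set_def cdf_def)
    qed
    show ?thesis using dec X Z strict by auto
  qed
  from res show "?Sq \<le> ?Sv" by simp
  from res show "strict_mono_on Y G \<Longrightarrow> ?Sq = ?Sv \<Longrightarrow> v \<in> quantile_set \<tau> M" by simp
qed


lemma G_int:
  assumes gi: "integrable M g" and intY: "integrable M (\<lambda>y. y)"
  shows "integrable M (G_fun \<tau> g d\<Phi> e)"
proof -
  have "integrable M (\<lambda>v. g v + (1 / \<tau>) * fst (d\<Phi> e) * v - (1 / (1 - \<tau>)) * snd (d\<Phi> e) * v)"
    using gi intY by (intro Bochner_Integration.integrable_diff Bochner_Integration.integrable_add integrable_mult_right) auto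
  thus ?thesis unfolding G_fun_def .
qed

lemma EL:
  fixes g :: "real \<Rightarrow> real" and \<Phi> :: "real \<times> real \<Rightarrow> real" and d\<Phi> :: "real \<times> real \<Rightarrow> real \<times> real"
  assumes tau: "0 < \<tau>" "\<tau> < 1" and intY: "integrable M (\<lambda>y. y)" and gi: "integrable M g"
    and \<Phi>i: "integrable M (\<lambda>y. \<Phi> (y, y))"
  shows "integrable M (\<lambda>y. score_L \<tau> g \<Phi> d\<Phi> y (em, v, ep))"
    and "(\<integral>y. score_L \<tau> g \<Phi> d\<Phi> y (em, v, ep) \<partial>M) =
      (\<integral>y. (\<tau> - indicator {..v} y) * (G_fun \<tau> g d\<Phi> (em, ep) y - G_fun \<tau> g d\<Phi> (em, ep) v) \<partial>M)
      + fst (d\<Phi> (em, ep)) * (em - (\<integral>y. y \<partial>M)) + snd (d\<Phi> (em, ep)) * (ep - (\<integral>y. y \<partial>M))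
      - \<Phi> (em, ep) + (\<integral>y. \<Phi> (y, y) \<partial>M)"
proof -
  let ?G = "G_fun \<tau> g d\<Phi> (em, ep)"
  let ?d1 = "fst (d\<Phi> (em, ep))" and ?d2 = "snd (d\<Phi> (em, ep))"
  have eq: "(\<lambda>y. score_L \<tau> g \<Phi> d\<Phi> y (em, v, ep)) = (\<lambda>y.
    (\<tau> - indicator {..v} y) * (?G y - ?G v)
    + ?d1 * (em - y) + ?d2 * (ep - y) - \<Phi> (em, ep) + \<Phi> (y, y))"
    using tau by (intro ext score_alt) auto
  have Gc: "integrable M (\<lambda>y. ?G y - ?G v)" using G_int[OF gi intY] by auto
  have i1: "integrable M (\<lambda>y. (\<tau> - indicator {..v} y) * (?G y - ?G v))"
    by (rule int_ind_mult[OF _ Gc]) simp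
  have i2: "integrable M (\<lambda>y. ?d1 * (em - y))" "integrable M (\<lambda>y. ?d2 * (ep - y))"
    using intY by auto
  have i3: "integrable M (\<lambda>y. em - y)" "integrable M (\<lambda>y. ep - y)" using intY by auto
  have c: "(\<integral>y. em - y \<partial>M) = em - (\<integral>y. y \<partial>M)" "(\<integral>y. ep - y \<partial>M) = ep - (\<integral>y. y \<partial>M)"
    using intY by (auto simp: Bochner_Integration.integral_diff prob_space[symmetric])
  show "integrable M (\<lambda>y. score_L \<tau> g \<Phi> d\<Phi> y (em, v, ep))"
    unfolding eq using i1 i2 \<Phi>i by auto
  show "(\<integral>y. score_L \<tau> g \<Phi> d\<Phi> y (em, v, ep) \<partial>M) = (\<integral>y. (\<tau> - indicator {..v} y) * (?G y - ?G v) \<partial>M)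
      + ?d1 * (em - (\<integral>y. y \<partial>M)) + ?d2 * (ep - (\<integral>y. y \<partial>M)) - \<Phi> (em, ep) + (\<integral>y. \<Phi> (y, y) \<partial>M)"
    unfolding eq using i1 i2 \<Phi>i c by (simp add: prob_space[symmetric])
qed


lemma EL_q:
  fixes g :: "real \<Rightarrow> real" and d\<Phi> :: "real \<times> real \<Rightarrow> real \<times> real"
  assumes tau: "0 < \<tau>" "\<tau> < 1" and intY: "integrable M (\<lambda>y. y)" and gi: "integrable M g"
    and q: "q \<in> quantile_set \<tau> M"
  shows "(\<integral>y. (\<tau> - indicator {..q} y) * (G_fun \<tau> g d\<Phi> e y - G_fun \<tau> g d\<Phi> e q) \<partial>M)
       = (\<integral>y. (\<tau> - indicator {..q} y) * (g y - g q) \<partial>M)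
         + fst (d\<Phi> e) * ((\<integral>y. y \<partial>M) - ES_lower \<tau> M) + snd (d\<Phi> e) * ((\<integral>y. y \<partial>M) - ES_upper \<tau> M)"
proof -
  define c where "c = (1 / \<tau>) * fst (d\<Phi> e) - (1 / (1 - \<tau>)) * snd (d\<Phi> e)"
  define EY where "EY = (\<integral>y. y \<partial>M)"
  define Iq where "Iq = (\<integral>y. indicator {..q} y * y \<partial>M)"
  have pw: "(\<tau> - indicator {..q} y) * (G_fun \<tau> g d\<Phi> e y - G_fun \<tau> g d\<Phi> e q)
      = (\<tau> - indicator {..q} y) * (g y - g q) + c * ((\<tau> - indicator {..q} y) * (y - q))" for y
    unfolding G_fun_def c_def by (simp only: divide_inverse) algebra
  have gc: "integrable M (\<lambda>y. g y - g q)" using gi by auto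
  have yc: "integrable M (\<lambda>y. y - q)" using intY by auto
  have i1: "integrable M (\<lambda>y. (\<tau> - indicator {..q} y) * (g y - g q))" by (rule int_ind_mult[OF _ gc]) simp
  have i2: "integrable M (\<lambda>y. (\<tau> - indicator {..q} y) * (y - q))" by (rule int_ind_mult[OF _ yc]) simp
  have J: "(\<integral>y. (\<tau> - indicator {..q} y) * (y - q) \<partial>M) = \<tau> * EY - \<tau> * q - Iq + q * C q"
  proof -
    have pw2: "(\<tau> - indicator {..q} y) * (y - q) = (\<tau> * y - \<tau> * q) - (indicator {..q} y * y - q * indicator {..q} y)" for y :: real
      by (simp add: algebra_simps)
    have ia: "integrable M (\<lambda>y. indicator {..q} y * y)"
      using integrable_mult_indicator[OF _ intY, of "{..q}"] by simp
    have ib: "integrable M (\<lambda>y. q * indicator {..q} y :: real)"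
      by (intro integrable_mult_right) (simp add: integrable_indicator_iff less_top[symmetric])
    have "(\<integral>y. (\<tau> - indicator {..q} y) * (y - q) \<partial>M)
        = (\<integral>y. (\<tau> * y - \<tau> * q) - (indicator {..q} y * y - q * indicator {..q} y) \<partial>M)"
      by (simp only: pw2)
    also have "\<dots> = (\<tau> * EY - \<tau> * q) - (Iq - q * C q)"
      using intY ia ib by (simp add: EY_def Iq_def prob_space[symmetric] cdf_def)
    finally show ?thesis by simp
  qed
  have L: "\<tau> * ES_lower \<tau> M = Iq + q * (\<tau> - C q)" unfolding Iq_def by (rule ES_lower_id[OF tau q intY])
  have U: "(1 - \<tau>) * ES_upper \<tau> M = EY - \<tau> * ES_lower \<tau> M" unfolding EY_def by (rule ES_upper_id[OF tau intY])
  have J2: "(\<integral>y. (\<tau> - indicator {..q} y) * (y - q) \<partial>M) = \<tau> * (EY - ES_lower \<tau> M)"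
    using J L by (simp add: algebra_simps)
  have J3: "(\<integral>y. (\<tau> - indicator {..q} y) * (y - q) \<partial>M) = (1 - \<tau>) * (ES_upper \<tau> M - EY)"
    using J2 U by (simp add: algebra_simps)
  have cJ: "c * (\<integral>y. (\<tau> - indicator {..q} y) * (y - q) \<partial>M)
      = fst (d\<Phi> e) * (EY - ES_lower \<tau> M) + snd (d\<Phi> e) * (EY - ES_upper \<tau> M)"
  proof -
    have "c * (\<integral>y. (\<tau> - indicator {..q} y) * (y - q) \<partial>M)
        = (1 / \<tau>) * fst (d\<Phi> e) * (\<integral>y. (\<tau> - indicator {..q} y) * (y - q) \<partial>M)
          - (1 / (1 - \<tau>)) * snd (d\<Phi> e) * (\<integral>y. (\<tau> - indicator {..q} y) * (y - q) \<partial>M)"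
      by (simp add: c_def algebra_simps)
    also have "(1 / \<tau>) * fst (d\<Phi> e) * (\<integral>y. (\<tau> - indicator {..q} y) * (y - q) \<partial>M)
        = fst (d\<Phi> e) * (EY - ES_lower \<tau> M)"
      unfolding J2 using tau by simp
    also have "(1 / (1 - \<tau>)) * snd (d\<Phi> e) * (\<integral>y. (\<tau> - indicator {..q} y) * (y - q) \<partial>M)
        = - (snd (d\<Phi> e) * (EY - ES_upper \<tau> M))"
    proof -
      have nz: "1 - \<tau> \<noteq> 0" using tau by simp
      have "(1 / (1 - \<tau>)) * snd (d\<Phi> e) * ((1 - \<tau>) * (ES_upper \<tau> M - EY))
          = snd (d\<Phi> e) * (ES_upper \<tau> M - EY)" using nz by simp
      thus ?thesis unfolding J3 by (simp add: algebra_simps)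
    qed
    finally show ?thesis by simp
  qed
  have "(\<integral>y. (\<tau> - indicator {..q} y) * (G_fun \<tau> g d\<Phi> e y - G_fun \<tau> g d\<Phi> e q) \<partial>M)
      = (\<integral>y. (\<tau> - indicator {..q} y) * (g y - g q) + c * ((\<tau> - indicator {..q} y) * (y - q)) \<partial>M)"
    by (simp only: pw)
  also have "\<dots> = (\<integral>y. (\<tau> - indicator {..q} y) * (g y - g q) \<partial>M) + c * (\<integral>y. (\<tau> - indicator {..q} y) * (y - q) \<partial>M)"
    using i1 i2 by simp
  finally show ?thesis using cJ by (simp add: EY_def)
qed

end

lemma core:
  fixes g :: "real \<Rightarrow> real" and \<Phi> :: "real \<times> real \<Rightarrow> real" and d\<Phi> :: "real \<times> real \<Rightarrow> real \<times> real"
    and M :: "real measure"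
  assumes tau: "0 < \<tau>" "\<tau> < 1" and Yi: "is_interval Y"
    and Mp: "prob_space M" "sets M = sets borel" and AEY: "AE y in M. y \<in> Y"
    and intY: "integrable M (\<lambda>y. y)" and gi: "integrable M g" and \<Phi>i: "integrable M (\<lambda>y. \<Phi> (y, y))"
    and sg: "is_subgradient_on (Y \<times> Y) \<Phi> d\<Phi>"
    and a: "em \<in> Y" "v \<in> Y" "ep \<in> Y"
    and q: "q \<in> quantile_set \<tau> M"
    and Gmono: "mono_on Y (G_fun \<tau> g d\<Phi> (em, ep))"
  shows "(\<integral>y. score_L \<tau> g \<Phi> d\<Phi> y (ES_lower \<tau> M, q, ES_upper \<tau> M) \<partial>M)
           \<le> (\<integral>y. score_L \<tau> g \<Phi> d\<Phi> y (em, v, ep) \<partial>M)"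
    and "strict_convex_on (Y \<times> Y) \<Phi> \<Longrightarrow> strict_mono_on Y (G_fun \<tau> g d\<Phi> (em, ep)) \<Longrightarrow>
         (\<integral>y. score_L \<tau> g \<Phi> d\<Phi> y (ES_lower \<tau> M, q, ES_upper \<tau> M) \<partial>M)
           = (\<integral>y. score_L \<tau> g \<Phi> d\<Phi> y (em, v, ep) \<partial>M) \<Longrightarrow> (em, v, ep) \<in> composite_triplet \<tau> M"
proof -
  interpret cdf_distribution M
    using Mp by (simp add: cdf_distribution_def real_distribution_def real_distribution_axioms_def)
  define Em where "Em = ES_lower \<tau> M"
  define Ep where "Ep = ES_upper \<tau> M"
  define EY where "EY = (\<integral>y. y \<partial>M)"
  define E\<Phi> where "E\<Phi> = (\<integral>y. \<Phi> (y, y) \<partial>M)"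
  define G where "G = G_fun \<tau> g d\<Phi> (em, ep)"
  define G' where "G' = G_fun \<tau> g d\<Phi> (Em, Ep)"
  define d1 where "d1 = fst (d\<Phi> (em, ep))"
  define d2 where "d2 = snd (d\<Phi> (em, ep))"
  define d1' where "d1' = fst (d\<Phi> (Em, Ep))"
  define d2' where "d2' = snd (d\<Phi> (Em, Ep))"
  define Sg where "Sg = (\<integral>y. (\<tau> - indicator {..q} y) * (g y - g q) \<partial>M)"
  define SGq where "SGq = (\<integral>y. (\<tau> - indicator {..q} y) * (G y - G q) \<partial>M)"
  define SGv where "SGv = (\<integral>y. (\<tau> - indicator {..v} y) * (G y - G v) \<partial>M)"
  have qY: "q \<in> Y" by (rule quantile_in[OF tau q AEY Yi])
  have EmY: "Em \<in> Y" and EpY: "Ep \<in> Y" using ES_in[OF tau intY AEY Yi] by (auto simp: Em_def Ep_def)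
  have La: "(\<integral>y. score_L \<tau> g \<Phi> d\<Phi> y (em, v, ep) \<partial>M) = SGv + d1 * (em - EY) + d2 * (ep - EY) - \<Phi> (em, ep) + E\<Phi>"
    unfolding SGv_def d1_def d2_def EY_def E\<Phi>_def G_def by (rule EL(2)[OF tau intY gi \<Phi>i])
  have Lh0: "(\<integral>y. score_L \<tau> g \<Phi> d\<Phi> y (Em, q, Ep) \<partial>M)
      = (\<integral>y. (\<tau> - indicator {..q} y) * (G' y - G' q) \<partial>M) + d1' * (Em - EY) + d2' * (Ep - EY) - \<Phi> (Em, Ep) + E\<Phi>"
    unfolding d1'_def d2'_def EY_def E\<Phi>_def G'_def by (rule EL(2)[OF tau intY gi \<Phi>i])
  have SG'q: "(\<integral>y. (\<tau> - indicator {..q} y) * (G' y - G' q) \<partial>M) = Sg + d1' * (EY - Em) + d2' * (EY - Ep)"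
    unfolding G'_def Sg_def d1'_def d2'_def EY_def Em_def Ep_def by (rule EL_q[OF tau intY gi q])
  have Lh: "(\<integral>y. score_L \<tau> g \<Phi> d\<Phi> y (Em, q, Ep) \<partial>M) = Sg - \<Phi> (Em, Ep) + E\<Phi>"
    using Lh0 SG'q by (simp add: algebra_simps)
  have SGq_eq: "SGq = Sg + d1 * (EY - Em) + d2 * (EY - Ep)"
    unfolding G_def Sg_def d1_def d2_def EY_def Em_def Ep_def SGq_def by (rule EL_q[OF tau intY gi q])
  have Gi: "integrable M G" unfolding G_def by (rule G_int[OF gi intY])
  have cmp: "SGq \<le> SGv" unfolding SGq_def SGv_def
    by (rule qscore_min(1)[OF tau q AEY a(2) qY Gi]) (simp add: G_def Gmono)
  have sgi: "\<Phi> (Em, Ep) \<ge> \<Phi> (em, ep) + d\<Phi> (em, ep) \<bullet> ((Em, Ep) - (em, ep))"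
    using sg a EmY EpY by (simp add: is_subgradient_on_def)
  have sgi2: "d\<Phi> (em, ep) \<bullet> ((Em, Ep) - (em, ep)) = d1 * Em - d1 * em + d2 * Ep - d2 * ep"
    by (simp add: inner_prod_def d1_def d2_def algebra_simps)
  have e1: "SGq = Sg + d1 * EY - d1 * Em + d2 * EY - d2 * Ep" using SGq_eq by (simp add: algebra_simps)
  have e2: "(\<integral>y. score_L \<tau> g \<Phi> d\<Phi> y (em, v, ep) \<partial>M) = SGv + d1 * em - d1 * EY + d2 * ep - d2 * EY - \<Phi> (em, ep) + E\<Phi>"
    using La by (simp add: algebra_simps)
  show "(\<integral>y. score_L \<tau> g \<Phi> d\<Phi> y (ES_lower \<tau> M, q, ES_upper \<tau> M) \<partial>M)
           \<le> (\<integral>y. score_L \<tau> g \<Phi> d\<Phi> y (em, v, ep) \<partial>M)"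
    using Lh e2 e1 cmp sgi sgi2 unfolding Em_def Ep_def by linarith
  assume sc: "strict_convex_on (Y \<times> Y) \<Phi>" and sm: "strict_mono_on Y (G_fun \<tau> g d\<Phi> (em, ep))"
    and eq: "(\<integral>y. score_L \<tau> g \<Phi> d\<Phi> y (ES_lower \<tau> M, q, ES_upper \<tau> M) \<partial>M)
           = (\<integral>y. score_L \<tau> g \<Phi> d\<Phi> y (em, v, ep) \<partial>M)"
  have eqS: "SGq = SGv" and eqP: "\<Phi> (Em, Ep) = \<Phi> (em, ep) + d\<Phi> (em, ep) \<bullet> ((Em, Ep) - (em, ep))"
    using Lh e2 e1 cmp sgi sgi2 eq unfolding Em_def Ep_def by linarith+
  have m1: "mono_on Y G" using Gmono by (simp add: G_def)
  have s1: "strict_mono_on Y G" using sm by (simp add: G_def)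
  have vq: "v \<in> quantile_set \<tau> M"
    by (rule qscore_min(2)[OF tau q AEY a(2) qY Gi m1 s1 eqS[unfolded SGq_def SGv_def]])
  have "(Em, Ep) = (em, ep)"
    by (rule strict_convex_eq[OF sc sg _ _ eqP]) (use a EmY EpY in auto)
  thus "(em, v, ep) \<in> composite_triplet \<tau> M"
    using vq by (auto simp: composite_triplet_def Em_def Ep_def)
qed


lemma cdist: assumes "prob_space M" "sets M = sets borel" shows "cdf_distribution M"
  using assms by (simp add: cdf_distribution_def real_distribution_def real_distribution_axioms_def)

lemma pointwise_part:
  assumes tau: "0 < \<tau>" "\<tau> < 1"
    and sg: "is_subgradient_on (Y \<times> Y) \<Phi> d\<Phi>"
    and Gm: "\<forall>e\<in>Y \<times> Y. mono_on Y (G_fun \<tau> g d\<Phi> e)"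
    and y: "y \<in> Y" and a: "a \<in> Y \<times> Y \<times> Y"
  shows "score_L \<tau> g \<Phi> d\<Phi> y a \<ge> score_L \<tau> g \<Phi> d\<Phi> y (y, y, y)
         \<and> score_L \<tau> g \<Phi> d\<Phi> y (y, y, y) = 0"
proof -
  obtain em v ep where aa: "a = (em, v, ep)" by (cases a) auto
  have em: "em \<in> Y" and v: "v \<in> Y" and ep: "ep \<in> Y" using a aa by auto
  have t: "\<tau> \<noteq> 0" "\<tau> \<noteq> 1" using tau by auto
  have z: "score_L \<tau> g \<Phi> d\<Phi> y (y, y, y) = 0"
    using score_alt[OF t, of g \<Phi> d\<Phi> y y y y] by simp
  let ?G = "G_fun \<tau> g d\<Phi> (em, ep)"
  have mG: "mono_on Y ?G" using Gm em ep by auto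
  have nn: "0 \<le> (\<tau> - indicator {..v} y) * (?G y - ?G v)"
  proof (cases "y \<le> v")
    case True
    hence "?G y \<le> ?G v" using mono_onD[OF mG y v] by simp
    thus ?thesis using True tau by (simp add: indicator_def mult_nonpos_nonpos)
  next
    case False
    hence "?G v \<le> ?G y" using mono_onD[OF mG v y] by simp
    thus ?thesis using False tau by (simp add: indicator_def)
  qed
  have sgi: "\<Phi> (y, y) \<ge> \<Phi> (em, ep) + d\<Phi> (em, ep) \<bullet> ((y, y) - (em, ep))"
    using sg em ep y by (simp add: is_subgradient_on_def)
  have ip: "d\<Phi> (em, ep) \<bullet> ((y, y) - (em, ep)) = fst (d\<Phi> (em, ep)) * y - fst (d\<Phi> (em, ep)) * em
      + snd (d\<Phi> (em, ep)) * y - snd (d\<Phi> (em, ep)) * ep"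
    by (simp add: inner_prod_def algebra_simps)
  have L: "score_L \<tau> g \<Phi> d\<Phi> y (em, v, ep) = (\<tau> - indicator {..v} y) * (?G y - ?G v)
    + (fst (d\<Phi> (em, ep)) * em - fst (d\<Phi> (em, ep)) * y) + (snd (d\<Phi> (em, ep)) * ep - snd (d\<Phi> (em, ep)) * y)
    - \<Phi> (em, ep) + \<Phi> (y, y)"
    using score_alt[OF t, of g \<Phi> d\<Phi> y em v ep] by (simp add: algebra_simps)
  show ?thesis unfolding aa using L nn sgi ip z by linarith
qed

lemma consistent_part:
  assumes tau: "0 < \<tau>" "\<tau> < 1" and Yi: "is_interval Y"
    and Fs_class: "\<And>M. M \<in> Fs \<Longrightarrow> prob_space M \<and> sets M = sets borel
                     \<and> (AE y in M. y \<in> Y) \<and> integrable M (\<lambda>y. y)"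
    and sg: "is_subgradient_on (Y \<times> Y) \<Phi> d\<Phi>"
    and g_int: "\<And>M. M \<in> Fs \<Longrightarrow> integrable M g"
    and Phi_int: "\<And>M. M \<in> Fs \<Longrightarrow> integrable M (\<lambda>y. \<Phi> (y, y))"
    and Gm: "\<forall>e\<in>Y \<times> Y. mono_on Y (G_fun \<tau> g d\<Phi> e)"
  shows "consistent Fs (Y \<times> Y \<times> Y) (score_L \<tau> g \<Phi> d\<Phi>) (composite_triplet \<tau>)"
    and "strict_convex_on (Y \<times> Y) \<Phi> \<Longrightarrow> (\<forall>e\<in>Y \<times> Y. strict_mono_on Y (G_fun \<tau> g d\<Phi> e)) \<Longrightarrow>
       (\<forall>M\<in>Fs. \<forall>ah\<in>composite_triplet \<tau> M. \<forall>a\<in>Y \<times> Y \<times> Y.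
          (\<integral>y. score_L \<tau> g \<Phi> d\<Phi> y ah \<partial>M) = (\<integral>y. score_L \<tau> g \<Phi> d\<Phi> y a \<partial>M) \<longrightarrow> a \<in> composite_triplet \<tau> M)"
proof -
  have int: "\<forall>M\<in>Fs. \<forall>a\<in>Y \<times> Y \<times> Y. integrable M (\<lambda>y. score_L \<tau> g \<Phi> d\<Phi> y a)"
  proof (intro ballI)
    fix M a assume M: "M \<in> Fs" and a: "a \<in> Y \<times> Y \<times> Y"
    obtain em v ep where aa: "a = (em, v, ep)" by (cases a) auto
    have Mp: "prob_space M" "sets M = sets borel" "integrable M (\<lambda>y. y)" using Fs_class[OF M] by auto
    show "integrable M (\<lambda>y. score_L \<tau> g \<Phi> d\<Phi> y a)"
      unfolding aa by (rule cdf_distribution.EL(1)[OF cdist[OF Mp(1,2)] tau Mp(3) g_int[OF M] Phi_int[OF M]])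
  qed
  have main: "(\<integral>y. score_L \<tau> g \<Phi> d\<Phi> y ah \<partial>M) \<le> (\<integral>y. score_L \<tau> g \<Phi> d\<Phi> y a \<partial>M)
     \<and> (strict_convex_on (Y \<times> Y) \<Phi> \<longrightarrow> (\<forall>e\<in>Y \<times> Y. strict_mono_on Y (G_fun \<tau> g d\<Phi> e)) \<longrightarrow>
        (\<integral>y. score_L \<tau> g \<Phi> d\<Phi> y ah \<partial>M) = (\<integral>y. score_L \<tau> g \<Phi> d\<Phi> y a \<partial>M) \<longrightarrow> a \<in> composite_triplet \<tau> M)"
    if M: "M \<in> Fs" and ah: "ah \<in> composite_triplet \<tau> M" and a: "a \<in> Y \<times> Y \<times> Y" for M ah a
  proof -
    obtain em v ep where aa: "a = (em, v, ep)" by (cases a) auto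
    have aY: "em \<in> Y" "v \<in> Y" "ep \<in> Y" using a aa by auto
    obtain q where q: "q \<in> quantile_set \<tau> M" and ahq: "ah = (ES_lower \<tau> M, q, ES_upper \<tau> M)"
      using ah by (auto simp: composite_triplet_def)
    have Mp: "prob_space M" "sets M = sets borel" "AE y in M. y \<in> Y" "integrable M (\<lambda>y. y)"
      using Fs_class[OF M] by auto
    have Gme: "mono_on Y (G_fun \<tau> g d\<Phi> (em, ep))" using Gm aY by auto
    note c = core[OF tau Yi Mp(1,2,3,4) g_int[OF M] Phi_int[OF M] sg aY q Gme]
    show ?thesis unfolding aa ahq using c aY by auto
  qed
  show "consistent Fs (Y \<times> Y \<times> Y) (score_L \<tau> g \<Phi> d\<Phi>) (composite_triplet \<tau>)"
    unfolding consistent_def using int main by blast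
  show "strict_convex_on (Y \<times> Y) \<Phi> \<Longrightarrow> (\<forall>e\<in>Y \<times> Y. strict_mono_on Y (G_fun \<tau> g d\<Phi> e)) \<Longrightarrow>
       (\<forall>M\<in>Fs. \<forall>ah\<in>composite_triplet \<tau> M. \<forall>a\<in>Y \<times> Y \<times> Y.
          (\<integral>y. score_L \<tau> g \<Phi> d\<Phi> y ah \<partial>M) = (\<integral>y. score_L \<tau> g \<Phi> d\<Phi> y a \<partial>M) \<longrightarrow> a \<in> composite_triplet \<tau> M)"
    using main by blast
qed

theorem mainTheorem2:
  fixes \<tau> :: real and Y :: "real set" and Fs :: "real measure set"
    and \<Phi> :: "real \<times> real \<Rightarrow> real" and d\<Phi> :: "real \<times> real \<Rightarrow> real \<times> real"
    and g :: "real \<Rightarrow> real"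
  assumes tau: "0 < \<tau>" "\<tau> < 1"
    and Y_interval: "is_interval Y"
    and Fs_class: "\<And>M. M \<in> Fs \<Longrightarrow> prob_space M \<and> sets M = sets borel
                     \<and> (AE y in M. y \<in> Y) \<and> integrable M (\<lambda>y. y)"
    and subgrad: "is_subgradient_on (Y \<times> Y) \<Phi> d\<Phi>"
    and g_int: "\<And>M. M \<in> Fs \<Longrightarrow> integrable M g"
    and Phi_int: "\<And>M. M \<in> Fs \<Longrightarrow> integrable M (\<lambda>y. \<Phi> (y, y))"
  shows "(convex_on (Y \<times> Y) \<Phi> \<and> (\<forall>e\<in>Y \<times> Y. mono_on Y (G_fun \<tau> g d\<Phi> e)) \<longrightarrow>
            consistent Fs (Y \<times> Y \<times> Y) (score_L \<tau> g \<Phi> d\<Phi>) (composite_triplet \<tau>)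
            \<and> (\<forall>y\<in>Y. \<forall>a\<in>Y \<times> Y \<times> Y.
                 score_L \<tau> g \<Phi> d\<Phi> y a \<ge> score_L \<tau> g \<Phi> d\<Phi> y (y, y, y)
                 \<and> score_L \<tau> g \<Phi> d\<Phi> y (y, y, y) = 0))
       \<and> (strict_convex_on (Y \<times> Y) \<Phi> \<and> (\<forall>e\<in>Y \<times> Y. strict_mono_on Y (G_fun \<tau> g d\<Phi> e)) \<longrightarrow>
            strictly_consistent Fs (Y \<times> Y \<times> Y) (score_L \<tau> g \<Phi> d\<Phi>) (composite_triplet \<tau>))"
proof (intro conjI impI)
  assume h: "convex_on (Y \<times> Y) \<Phi> \<and> (\<forall>e\<in>Y \<times> Y. mono_on Y (G_fun \<tau> g d\<Phi> e))"
  hence Gm: "\<forall>e\<in>Y \<times> Y. mono_on Y (G_fun \<tau> g d\<Phi> e)" by simp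
  show "consistent Fs (Y \<times> Y \<times> Y) (score_L \<tau> g \<Phi> d\<Phi>) (composite_triplet \<tau>)"
    by (rule consistent_part(1)[OF tau Y_interval Fs_class subgrad g_int Phi_int Gm])
  show "\<forall>y\<in>Y. \<forall>a\<in>Y \<times> Y \<times> Y.
                 score_L \<tau> g \<Phi> d\<Phi> y a \<ge> score_L \<tau> g \<Phi> d\<Phi> y (y, y, y)
                 \<and> score_L \<tau> g \<Phi> d\<Phi> y (y, y, y) = 0"
    using pointwise_part[OF tau subgrad Gm] by blast
next
  assume h: "strict_convex_on (Y \<times> Y) \<Phi> \<and> (\<forall>e\<in>Y \<times> Y. strict_mono_on Y (G_fun \<tau> g d\<Phi> e))"
  hence Gm: "\<forall>e\<in>Y \<times> Y. mono_on Y (G_fun \<tau> g d\<Phi> e)" by (auto intro: strict_mono_on_imp_mono_on)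
  note cp = consistent_part[OF tau Y_interval Fs_class subgrad g_int Phi_int Gm]
  show "strictly_consistent Fs (Y \<times> Y \<times> Y) (score_L \<tau> g \<Phi> d\<Phi>) (composite_triplet \<tau>)"
    unfolding strictly_consistent_def using cp h by blast
qed

end
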